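(* Let $(a_n)_{n\ge1}$ be a sequence in $(0,1)$ with $\sum_n(1-a_n)<\infty$, and let $b_n=\lfloor 1/(1-a_n)\rfloor$. Define probability measures on $\mathbb{Z}$ by $\nu_n(1)=\frac{1+2b_n}{3+2b_n}$, $\nu_n(-b_n)=\nu_n(-b_n-1)=\frac{1}{3+2b_n}$, and $\nu_n(k)=0$ otherwise. Then $E(\nu_n)=0$, $m_2(\nu_n)=\frac{2b_n^2+4b_n+2}{3+2b_n}$, and for every ergodic dynamical system $(X,\mathcal{B},m,\tau)$ the sequence $\mu_n=\nu_1*\cdots*\nu_n$ has the strong sweeping out property.
   Context: $(X,\mathcal{B},m)$ is a non-atomic separable probability space and $\tau$ an invertible, measure-preserving, ergodic transformation. For a probability measure $\mu$ on $\mathbb{Z}$, $\mu f(x)=\sum_k\mu(k)f(\tau^kx)$; $\chi_B$ is the indicator of $B$. A sequence of probability measures $(\mu_n)$ on $\mathbb{Z}$ has the strong sweeping out property if for every $\epsilon>0$ there is $B\in\mathcal{B}$ with $m(B)<\epsilon$ such that $\limsup_n\mu_n\chi_B(x)=1$ a.e. and $\liminf_n\mu_n\chi_B(x)=0$ a.e. $E(\nu)=\sum_k k\nu(k)$, $m_2(\nu)=\sum_k k^2\nu(k)$; convolution $(\mu*\nu)(k)=\sum_j\mu(k-j)\nu(j)$. *)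

theory Defs
  imports "HOL-Probability.Probability"
begin

text \<open>Probability measures on the integers are represented by their mass functions
  int \<Rightarrow> real. Sums over the integers are unordered infinite sums.\<close>

definition expect_int :: "(int \<Rightarrow> real) \<Rightarrow> real" where
  "expect_int \<nu> = (\<Sum>\<^sub>\<infinity>k\<in>UNIV. real_of_int k * \<nu> k)"

definition moment2_int :: "(int \<Rightarrow> real) \<Rightarrow> real" where
  "moment2_int \<nu> = (\<Sum>\<^sub>\<infinity>k\<in>UNIV. (real_of_int k)^2 * \<nu> k)"

definition conv_int :: "(int \<Rightarrow> real) \<Rightarrow> (int \<Rightarrow> real) \<Rightarrow> (int \<Rightarrow> real)" where
  "conv_int \<mu> \<nu> = (\<lambda>k. \<Sum>\<^sub>\<infinity>j\<in>UNIV. \<mu> (k - j) * \<nu> j)"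

definition tpow :: "'a measure \<Rightarrow> ('a \<Rightarrow> 'a) \<Rightarrow> int \<Rightarrow> 'a \<Rightarrow> 'a" where
  "tpow M T k = (if 0 \<le> k then T ^^ nat k else (the_inv_into (space M) T) ^^ nat (- k))"

definition apply_meas :: "'a measure \<Rightarrow> ('a \<Rightarrow> 'a) \<Rightarrow> (int \<Rightarrow> real) \<Rightarrow> ('a \<Rightarrow> real) \<Rightarrow> 'a \<Rightarrow> real" where
  "apply_meas M T \<mu> f x = (\<Sum>\<^sub>\<infinity>k\<in>UNIV. \<mu> k * f (tpow M T k x))"

definition atom :: "'a measure \<Rightarrow> 'a set \<Rightarrow> bool" where
  "atom M A \<longleftrightarrow> A \<in> sets M \<and> measure M A > 0 \<and>
     (\<forall>B\<in>sets M. B \<subseteq> A \<longrightarrow> measure M B = 0 \<or> measure M B = measure M A)"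

definition non_atomic :: "'a measure \<Rightarrow> bool" where
  "non_atomic M \<longleftrightarrow> (\<nexists>A. atom M A)"

definition separable_measure :: "'a measure \<Rightarrow> bool" where
  "separable_measure M \<longleftrightarrow> (\<exists>C. countable C \<and> C \<subseteq> sets M \<and>
     (\<forall>A\<in>sets M. \<forall>e>0. \<exists>D\<in>C. measure M ((A - D) \<union> (D - A)) < e))"

definition invertible_mp :: "'a measure \<Rightarrow> ('a \<Rightarrow> 'a) \<Rightarrow> bool" where
  "invertible_mp M T \<longleftrightarrow> bij_betw T (space M) (space M) \<and>
     T \<in> measurable M M \<and> the_inv_into (space M) T \<in> measurable M M \<and>
     (\<forall>A\<in>sets M. measure M (T -` A \<inter> space M) = measure M A)"

definition ergodic_map :: "'a measure \<Rightarrow> ('a \<Rightarrow> 'a) \<Rightarrow> bool" where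
  "ergodic_map M T \<longleftrightarrow> (\<forall>A\<in>sets M. T -` A \<inter> space M = A \<longrightarrow>
     measure M A = 0 \<or> measure M A = 1)"

definition ergodic_system :: "'a measure \<Rightarrow> ('a \<Rightarrow> 'a) \<Rightarrow> bool" where
  "ergodic_system M T \<longleftrightarrow> prob_space M \<and> non_atomic M \<and> separable_measure M \<and>
     invertible_mp M T \<and> ergodic_map M T"

definition strong_sweeping_out :: "'a measure \<Rightarrow> ('a \<Rightarrow> 'a) \<Rightarrow> (nat \<Rightarrow> int \<Rightarrow> real) \<Rightarrow> bool" where
  "strong_sweeping_out M T \<mu> \<longleftrightarrow> (\<forall>e>0. \<exists>B\<in>sets M. measure M B < e \<and>
     (AE x in M. limsup (\<lambda>n. ereal (apply_meas M T (\<mu> n) (indicator B) x)) = 1) \<and>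
     (AE x in M. liminf (\<lambda>n. ereal (apply_meas M T (\<mu> n) (indicator B) x)) = 0))"

definition nu_b :: "int \<Rightarrow> int \<Rightarrow> real" where
  "nu_b b k = (if k = 1 then (1 + 2 * of_int b) / (3 + 2 * of_int b)
     else if k = - b \<or> k = - b - 1 then 1 / (3 + 2 * of_int b) else 0)"

primrec mu_seq :: "(nat \<Rightarrow> int \<Rightarrow> real) \<Rightarrow> nat \<Rightarrow> int \<Rightarrow> real" where
  "mu_seq \<nu> 0 = (\<lambda>k. if k = 0 then 1 else 0)"
| "mu_seq \<nu> (Suc n) = conv_int (mu_seq \<nu> n) (\<nu> (Suc n))"

end

theory Submission
  imports Defs
begin


lemma infsum_fin:
  fixes f :: "int \<Rightarrow> real"
  assumes "finite S" "\<And>k. k \<notin> S \<Longrightarrow> f k = 0"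
  shows "infsum f UNIV = sum f S"
proof -
  have "infsum f UNIV = infsum f S"
    by (rule infsum_cong_neutral) (use assms in auto)
  then show ?thesis using assms(1) by simp
qed

lemma nu_b_supp: "k \<notin> {1, -b, -b-1} \<Longrightarrow> nu_b b k = 0"
  by (auto simp: nu_b_def)

lemma nu_b_sum3:
  fixes g :: "int \<Rightarrow> real"
  assumes "b \<ge> 1"
  shows "sum g {1, -b, -b-1} = g 1 + g (-b) + g (-b-1)"
  using assms by (simp add: algebra_simps)

lemma nu_vals: assumes "b \<ge> 1"
  shows "nu_b b 1 = (1 + 2 * of_int b) / (3 + 2 * of_int b)"
    "nu_b b (-b) = 1 / (3 + 2 * of_int b)" "nu_b b (-b-1) = 1 / (3 + 2 * of_int b)"
  using assms by (auto simp: nu_b_def)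

lemma alg1: "(3 + 2 * (x::real)) \<noteq> 0 \<Longrightarrow> (1 + 2*x)/(3+2*x) + (-x) * (1/(3+2*x)) + (-x-1) * (1/(3+2*x)) = 0"
  by (simp add: add_divide_distrib[symmetric] diff_divide_distrib[symmetric] algebra_simps)
lemma alg2: "(3 + 2 * (x::real)) \<noteq> 0 \<Longrightarrow> (1 + 2*x)/(3+2*x) + (-x)^2 * (1/(3+2*x)) + (-x-1)^2 * (1/(3+2*x)) = (2 * x^2 + 4 * x + 2) / (3 + 2 * x)"
  by (simp add: add_divide_distrib[symmetric] diff_divide_distrib[symmetric] algebra_simps power2_eq_square)

lemma expect_nu: assumes "b \<ge> 1" shows "expect_int (nu_b b) = 0"
proof -
  have "expect_int (nu_b b) = (\<Sum>k\<in>{1, -b, -b-1}. real_of_int k * nu_b b k)"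
    unfolding expect_int_def by (rule infsum_fin) (auto simp: nu_b_def)
  also have "\<dots> = nu_b b 1 + (- b) * nu_b b (-b) + (-b-1) * nu_b b (-b-1)"
    using nu_b_sum3[OF assms] by simp
  also have "\<dots> = 0"
  proof -
    have d: "(3 + 2 * real_of_int b) \<noteq> 0" using assms by linarith
    show ?thesis unfolding nu_vals[OF assms] using alg1[OF d] by simp
  qed
  finally show ?thesis .
qed

lemma m2_nu: assumes "b \<ge> 1" shows "moment2_int (nu_b b) = (2 * (of_int b)^2 + 4 * of_int b + 2) / (3 + 2 * of_int b)"
proof -
  have "moment2_int (nu_b b) = (\<Sum>k\<in>{1, -b, -b-1}. (real_of_int k)^2 * nu_b b k)"
    unfolding moment2_int_def by (rule infsum_fin) (auto simp: nu_b_def)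
  also have "\<dots> = nu_b b 1 + (- b)^2 * nu_b b (-b) + (-b-1)^2 * nu_b b (-b-1)"
    using nu_b_sum3[OF assms] by simp
  also have "\<dots> = (2 * (of_int b)^2 + 4 * of_int b + 2) / (3 + 2 * of_int b)"
  proof -
    have d: "(3 + 2 * real_of_int b) \<noteq> 0" using assms by linarith
    show ?thesis unfolding nu_vals[OF assms] using alg2[OF d] by simp
  qed
  finally show ?thesis .
qed

lemma conv_nu:
  assumes "b \<ge> 1"
  shows "conv_int \<mu> (nu_b b) k = nu_b b 1 * \<mu> (k - 1) + nu_b b (-b) * \<mu> (k + b) + nu_b b (-b) * \<mu> (k + b + 1)"
proof -
  have "conv_int \<mu> (nu_b b) k = (\<Sum>j\<in>{1, -b, -b-1}. \<mu> (k - j) * nu_b b j)"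
    unfolding conv_int_def by (rule infsum_fin) (auto simp: nu_b_def)
  also have "\<dots> = \<mu> (k - 1) * nu_b b 1 + \<mu> (k + b) * nu_b b (-b) + \<mu> (k + b + 1) * nu_b b (-b-1)"
    using nu_b_sum3[OF assms] by (simp add: algebra_simps)
  also have "nu_b b (-b-1) = nu_b b (-b)" using assms by (simp add: nu_b_def)
  finally show ?thesis by (simp add: algebra_simps)
qed



lemma sum_shift_int: "(\<Sum>k\<in>{l..h}. f (k + c)) = (\<Sum>k\<in>{l+c..h+c::int}. f k)"
  by (rule sum.reindex_bij_witness[of _ "\<lambda>k. k - c" "\<lambda>k. k + c"]) auto

lemma sum_zero_outside:
  fixes \<mu> :: "int \<Rightarrow> real"
  assumes "\<And>k. k \<notin> {lo..hi} \<Longrightarrow> \<mu> k = 0" "l' \<le> lo" "hi \<le> h'"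
  shows "sum \<mu> {l'..h'} = sum \<mu> {lo..hi}"
  by (rule sum.mono_neutral_right) (use assms in auto)

lemma sum_nonneg_mono:
  fixes \<mu> :: "int \<Rightarrow> real"
  assumes "\<And>k. \<mu> k \<ge> 0" "l' \<le> lo" "hi \<le> h'"
  shows "sum \<mu> {lo..hi} \<le> sum \<mu> {l'..h'}"
  by (rule sum_mono2) (use assms in auto)

lemma nu_nonneg: "b \<ge> 1 \<Longrightarrow> nu_b b k \<ge> 0"
  by (auto simp: nu_b_def)

lemma alg3: "(3 + 2 * (x::real)) \<noteq> 0 \<Longrightarrow> (1 + 2*x)/(3+2*x) + 2 * (1/(3+2*x)) = 1"
  by (simp add: add_divide_distrib[symmetric] diff_divide_distrib[symmetric] algebra_simps)
lemma alg4: "(3 + 2 * (x::real)) \<noteq> 0 \<Longrightarrow> (1 + 2*x)/(3+2*x) = 1 - 2/(3+2*x)"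
  by (simp add: add_divide_distrib[symmetric] diff_divide_distrib[symmetric] algebra_simps)

lemma nu_p_r: "b \<ge> 1 \<Longrightarrow> nu_b b 1 + 2 * nu_b b (-b) = 1"
proof -
  assume b: "b \<ge> 1"
  have d: "3 + 2 * real_of_int b \<noteq> 0" using b by linarith
  show ?thesis using b alg3[OF d] by (simp add: nu_vals)
qed

definition qb :: "int \<Rightarrow> real" where "qb b = 2 / (3 + 2 * of_int b)"

lemma nu_p_q: "b \<ge> 1 \<Longrightarrow> nu_b b 1 = 1 - qb b"
proof -
  assume b: "b \<ge> 1"
  have d: "3 + 2 * real_of_int b \<noteq> 0" using b by linarith
  show ?thesis using b alg4[OF d] by (simp add: nu_vals qb_def)
qed

lemma conv_sum_split:
  assumes "b \<ge> 1"
  shows "(\<Sum>k\<in>{l..h}. conv_int \<mu> (nu_b b) k) =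
     nu_b b 1 * sum \<mu> {l-1..h-1} + nu_b b (-b) * sum \<mu> {l+b..h+b} + nu_b b (-b) * sum \<mu> {l+b+1..h+b+1}"
proof -
  have "(\<Sum>k\<in>{l..h}. conv_int \<mu> (nu_b b) k) =
     nu_b b 1 * (\<Sum>k\<in>{l..h}. \<mu> (k + (-1))) + nu_b b (-b) * (\<Sum>k\<in>{l..h}. \<mu> (k + b)) + nu_b b (-b) * (\<Sum>k\<in>{l..h}. \<mu> (k + (b+1)))"
    by (simp add: conv_nu[OF assms] sum.distrib sum_distrib_left add.assoc)
  then show ?thesis by (simp only: sum_shift_int) (simp add: algebra_simps)
qed

lemma conv_nonneg:
  assumes "b \<ge> 1" "\<And>k. \<mu> k \<ge> 0"
  shows "conv_int \<mu> (nu_b b) k \<ge> 0"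
  unfolding conv_nu[OF assms(1)] using assms nu_nonneg[OF assms(1)] by simp

lemma conv_zero:
  assumes "b \<ge> 1" "\<And>k. k \<notin> {lo..hi} \<Longrightarrow> \<mu> k = 0" "k \<notin> {lo-b-1..hi+1}"
  shows "conv_int \<mu> (nu_b b) k = 0"
proof -
  have "\<mu> (k-1) = 0" "\<mu> (k+b) = 0" "\<mu> (k+b+1) = 0"
    using assms by (auto intro!: assms(2))
  then show ?thesis unfolding conv_nu[OF assms(1)] by simp
qed

lemma conv_sum_full:
  assumes "b \<ge> 1" "\<And>k. k \<notin> {lo..hi} \<Longrightarrow> \<mu> k = 0"
  shows "(\<Sum>k\<in>{lo-b-1..hi+1}. conv_int \<mu> (nu_b b) k) = sum \<mu> {lo..hi}"
proof -
  have "sum \<mu> {lo - b - 1 - 1..hi + 1 - 1} = sum \<mu> {lo..hi}"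
    by (rule sum_zero_outside) (use assms in auto)
  moreover have "sum \<mu> {lo - b - 1 + b..hi + 1 + b} = sum \<mu> {lo..hi}"
    by (rule sum_zero_outside) (use assms in auto)
  moreover have "sum \<mu> {lo - b - 1 + b + 1..hi + 1 + b + 1} = sum \<mu> {lo..hi}"
    by (rule sum_zero_outside) (use assms in auto)
  ultimately have "(\<Sum>k\<in>{lo-b-1..hi+1}. conv_int \<mu> (nu_b b) k) = (nu_b b 1 + 2 * nu_b b (-b)) * sum \<mu> {lo..hi}"
    unfolding conv_sum_split[OF assms(1)] by (simp add: algebra_simps)
  then show ?thesis using nu_p_r[OF assms(1)] by simp
qed

lemma conv_sum_wide:
  assumes "b \<ge> 1" "\<And>k. \<mu> k \<ge> 0"
  shows "(\<Sum>k\<in>{lo-b-1..hi+1}. conv_int \<mu> (nu_b b) k) \<ge> sum \<mu> {lo..hi}"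
proof -
  have "sum \<mu> {lo - b - 1 - 1..hi + 1 - 1} \<ge> sum \<mu> {lo..hi}"
    by (rule sum_nonneg_mono) (use assms in auto)
  moreover have "sum \<mu> {lo - b - 1 + b..hi + 1 + b} \<ge> sum \<mu> {lo..hi}"
    by (rule sum_nonneg_mono) (use assms in auto)
  moreover have "sum \<mu> {lo - b - 1 + b + 1..hi + 1 + b + 1} \<ge> sum \<mu> {lo..hi}"
    by (rule sum_nonneg_mono) (use assms in auto)
  moreover have "nu_b b 1 \<ge> 0" "nu_b b (-b) \<ge> 0" using nu_nonneg[OF assms(1)] by auto
  ultimately have "(\<Sum>k\<in>{lo-b-1..hi+1}. conv_int \<mu> (nu_b b) k) \<ge>
     nu_b b 1 * sum \<mu> {lo..hi} + nu_b b (-b) * sum \<mu> {lo..hi} + nu_b b (-b) * sum \<mu> {lo..hi}"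
    unfolding conv_sum_split[OF assms(1)]
    by (intro add_mono mult_left_mono) auto
  also have "nu_b b 1 * sum \<mu> {lo..hi} + nu_b b (-b) * sum \<mu> {lo..hi} + nu_b b (-b) * sum \<mu> {lo..hi} = (nu_b b 1 + 2 * nu_b b (-b)) * sum \<mu> {lo..hi}"
    by (simp add: algebra_simps)
  finally show ?thesis using nu_p_r[OF assms(1)] by simp
qed

lemma conv_sum_shift:
  assumes "b \<ge> 1" "\<And>k. \<mu> k \<ge> 0"
  shows "(\<Sum>k\<in>{lo+1..hi+1}. conv_int \<mu> (nu_b b) k) \<ge> nu_b b 1 * sum \<mu> {lo..hi}"
proof -
  have nn: "\<And>A. sum \<mu> A \<ge> 0"
    using assms(2) by (auto intro: sum_nonneg)
  moreover have "nu_b b (-b) \<ge> 0" using nu_nonneg[OF assms(1)] by auto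
  ultimately show ?thesis unfolding conv_sum_split[OF assms(1)]
    using nn by (simp add: add.assoc add_nonneg_nonneg mult_nonneg_nonneg)
qed



lemma mu_basic:
  assumes hb: "\<forall>n\<ge>1. bs n \<ge> (1::int)"
  shows "(\<forall>k. mu_seq (\<lambda>n. nu_b (bs n)) n k \<ge> 0) \<and>
    (\<exists>D\<ge>0. (\<forall>k. k \<notin> {int n - D..int n} \<longrightarrow> mu_seq (\<lambda>n. nu_b (bs n)) n k = 0) \<and>
       sum (mu_seq (\<lambda>n. nu_b (bs n)) n) {int n - D..int n} = 1)"
proof (induction n)
  case 0
  show ?case by (auto intro!: exI[of _ 0])
next
  case (Suc n)
  let ?mu = "mu_seq (\<lambda>n. nu_b (bs n)) n"
  have b: "bs (Suc n) \<ge> 1" using hb by auto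
  from Suc obtain D where D: "D \<ge> 0" "\<And>k. k \<notin> {int n - D..int n} \<Longrightarrow> ?mu k = 0"
    "sum ?mu {int n - D..int n} = 1" and nn: "\<And>k. ?mu k \<ge> 0" by blast
  have e: "{int n - D - bs (Suc n) - 1..int n + 1} = {int (Suc n) - (D + bs (Suc n) + 2)..int (Suc n)}"
    by auto
  show ?case
  proof (intro conjI allI exI[of _ "D + bs (Suc n) + 2"])
    fix k show "mu_seq (\<lambda>n. nu_b (bs n)) (Suc n) k \<ge> 0"
      using conv_nonneg[OF b nn] by simp
  next
    show "D + bs (Suc n) + 2 \<ge> 0" using D b by simp
  next
    fix k show "k \<notin> {int (Suc n) - (D + bs (Suc n) + 2)..int (Suc n)} \<longrightarrow>
        mu_seq (\<lambda>n. nu_b (bs n)) (Suc n) k = 0"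
    proof
      assume k: "k \<notin> {int (Suc n) - (D + bs (Suc n) + 2)..int (Suc n)}"
      have "conv_int ?mu (nu_b (bs (Suc n))) k = 0"
        by (rule conv_zero[OF b, where lo="int n - D" and hi="int n"]) (use D(2) k e in auto)
      then show "mu_seq (\<lambda>n. nu_b (bs n)) (Suc n) k = 0" by simp
    qed
  next
    show "sum (mu_seq (\<lambda>n. nu_b (bs n)) (Suc n)) {int (Suc n) - (D + bs (Suc n) + 2)..int (Suc n)} = 1"
      using conv_sum_full[OF b, where \<mu>="?mu" and lo="int n - D" and hi="int n"] D(2,3) e by simp
  qed
qed

lemma mu_le1:
  assumes hb: "\<forall>n\<ge>1. bs n \<ge> (1::int)" and "finite W"
  shows "sum (mu_seq (\<lambda>n. nu_b (bs n)) n) W \<le> 1"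
proof -
  let ?mu = "mu_seq (\<lambda>n. nu_b (bs n)) n"
  from mu_basic[OF hb, of n] obtain D where nn: "\<And>k. ?mu k \<ge> 0" and
    D: "\<And>k. k \<notin> {int n - D..int n} \<Longrightarrow> ?mu k = 0" "sum ?mu {int n - D..int n} = 1" by blast
  have "sum ?mu W = sum ?mu (W \<inter> {int n - D..int n})"
    by (rule sum.mono_neutral_right) (use assms D in auto)
  also have "\<dots> \<le> sum ?mu {int n - D..int n}"
    by (rule sum_mono2) (use nn in auto)
  finally show ?thesis using D by simp
qed

lemma mu_conc:
  assumes hb: "\<forall>n\<ge>1. bs n \<ge> (1::int)"
  shows "\<exists>c\<ge>0. c \<le> (\<Sum>i\<in>{1..min n N}. bs i + 2) \<and>
     sum (mu_seq (\<lambda>n. nu_b (bs n)) n) {int n - c..int n} \<ge> 1 - (\<Sum>i\<in>{N<..n}. qb (bs i))"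
proof (induction n)
  case 0
  show ?case by (auto intro!: exI[of _ 0])
next
  case (Suc n)
  let ?mu = "mu_seq (\<lambda>n. nu_b (bs n)) n"
  have b: "bs (Suc n) \<ge> 1" using hb by auto
  from mu_basic[OF hb, of n] have nn: "\<And>k. ?mu k \<ge> 0" by blast
  from Suc obtain c where c: "c \<ge> 0" "c \<le> (\<Sum>i\<in>{1..min n N}. bs i + 2)"
     "sum ?mu {int n - c..int n} \<ge> 1 - (\<Sum>i\<in>{N<..n}. qb (bs i))" by blast
  show ?case
  proof (cases "Suc n \<le> N")
    case True
    have e: "{int n - c - bs (Suc n) - 1..int n + 1} = {int (Suc n) - (c + bs (Suc n) + 2)..int (Suc n)}"
      by auto
    have m: "min (Suc n) N = Suc n" "min n N = n" using True by auto
    have t: "{N<..Suc n} = {}" "{N<..n} = {}" using True by auto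
    show ?thesis
    proof (intro exI[of _ "c + bs (Suc n) + 2"] conjI)
      show "c + bs (Suc n) + 2 \<ge> 0" using c b by simp
      show "c + bs (Suc n) + 2 \<le> (\<Sum>i\<in>{1..min (Suc n) N}. bs i + 2)"
        using c(2) unfolding m by simp
      show "1 - (\<Sum>i\<in>{N<..Suc n}. qb (bs i)) \<le> sum (mu_seq (\<lambda>n. nu_b (bs n)) (Suc n)) {int (Suc n) - (c + bs (Suc n) + 2)..int (Suc n)}"
        using conv_sum_wide[OF b, where \<mu>="?mu", OF nn, where lo="int n - c" and hi="int n"] c(3) e t by simp
    qed
  next
    case False
    have m: "min (Suc n) N = min n N" using False by auto
    have t: "{N<..Suc n} = insert (Suc n) {N<..n}" using False by auto
    have q: "qb (bs (Suc n)) \<ge> 0" using b by (simp add: qb_def)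
    have le1: "sum ?mu {int n - c..int n} \<le> 1" by (rule mu_le1[OF hb]) simp
    have e: "{int n - c + 1..int n + 1} = {int (Suc n) - c..int (Suc n)}" by auto
    have "sum (mu_seq (\<lambda>n. nu_b (bs n)) (Suc n)) {int (Suc n) - c..int (Suc n)} \<ge>
        (1 - qb (bs (Suc n))) * sum ?mu {int n - c..int n}"
      using conv_sum_shift[OF b, where \<mu>="?mu", OF nn, where lo="int n - c" and hi="int n"] e nu_p_q[OF b] by simp
    moreover have "(1 - qb (bs (Suc n))) * sum ?mu {int n - c..int n} \<ge>
        sum ?mu {int n - c..int n} - qb (bs (Suc n))"
      using le1 q by (simp add: algebra_simps mult_left_le)
    ultimately show ?thesis using c t m by (intro exI[of _ c]) auto
  qed
qed



lemma funpow_meas: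
  assumes "S \<in> measurable M M"
  shows "(S ^^ n) \<in> measurable M M"
proof (induction n)
  case (Suc n)
  have "S ^^ Suc n = S \<circ> S ^^ n" by simp
  then show ?case using measurable_comp[OF Suc assms] by (simp add: o_def)
qed (simp add: measurable_ident)

lemma funpow_space:
  assumes "S \<in> measurable M M" "x \<in> space M"
  shows "(S ^^ n) x \<in> space M"
  using measurable_space[OF funpow_meas[OF assms(1)] assms(2)] .

lemma funpow_pres:
  assumes S: "S \<in> measurable M M" and P: "\<And>A. A \<in> sets M \<Longrightarrow> measure M (S -` A \<inter> space M) = measure M A"
    and A: "A \<in> sets M"
  shows "measure M ((S ^^ n) -` A \<inter> space M) = measure M A"
proof (induction n)
  case 0 then show ?case using sets.sets_into_space[OF A] by (simp add: Int_absorb2)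
next
  case (Suc n)
  have e: "(S ^^ Suc n) -` A \<inter> space M = S -` ((S ^^ n) -` A \<inter> space M) \<inter> space M"
    using measurable_space[OF S] by (auto simp: funpow_Suc_right simp del: funpow.simps)
  have m: "(S ^^ n) -` A \<inter> space M \<in> sets M"
    using measurable_sets[OF funpow_meas[OF S] A] .
  show ?case unfolding e P[OF m] Suc ..
qed

locale ES = prob_space M for M :: "'a measure" +
  fixes T :: "'a \<Rightarrow> 'a"
  assumes inv: "invertible_mp M T" and erg: "ergodic_map M T" and nonat: "non_atomic M"
begin

lemma T_meas: "T \<in> measurable M M" using inv by (simp add: invertible_mp_def)
lemma T_pres: "A \<in> sets M \<Longrightarrow> measure M (T -` A \<inter> space M) = measure M A"
  using inv by (simp add: invertible_mp_def)
lemma T_bij: "bij_betw T (space M) (space M)" using inv by (simp add: invertible_mp_def)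

definition "Ti = the_inv_into (space M) T"

lemma Ti_meas: "Ti \<in> measurable M M" using inv by (simp add: invertible_mp_def Ti_def)

lemma Ti_T: "x \<in> space M \<Longrightarrow> Ti (T x) = x"
  unfolding Ti_def using T_bij by (simp add: bij_betw_def the_inv_into_f_f)

lemma T_Ti: "x \<in> space M \<Longrightarrow> T (Ti x) = x"
  unfolding Ti_def using T_bij by (simp add: bij_betw_def f_the_inv_into_f)

lemma Ti_space: "x \<in> space M \<Longrightarrow> Ti x \<in> space M"
  using measurable_space[OF Ti_meas] .

lemma T_space: "x \<in> space M \<Longrightarrow> T x \<in> space M"
  using measurable_space[OF T_meas] .

lemma Ti_pres:
  assumes A: "A \<in> sets M"
  shows "measure M (Ti -` A \<inter> space M) = measure M A"
proof -
  have m: "Ti -` A \<inter> space M \<in> sets M" using measurable_sets[OF Ti_meas A] .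
  have "T -` (Ti -` A \<inter> space M) \<inter> space M = A"
    using sets.sets_into_space[OF A] T_space Ti_T Ti_space T_Ti
    by auto
  then show ?thesis using T_pres[OF m] by simp
qed

lemma Tn_Tin: "z \<in> space M \<Longrightarrow> (Ti ^^ s) ((T ^^ s) z) = z"
proof (induction s)
  case (Suc s)
  have sp: "(T ^^ s) z \<in> space M" using funpow_space[OF T_meas Suc.prems] .
  have a: "(T ^^ Suc s) z = T ((T^^s) z)" by simp
  have b: "(Ti^^Suc s) y = (Ti^^s) (Ti y)" for y by (simp add: funpow_Suc_right del: funpow.simps)
  show ?case unfolding a b Ti_T[OF sp] using Suc by simp
qed simp

definition "Img s Z = (Ti ^^ s) -` Z \<inter> space M"

lemma Img_sets: "Z \<in> sets M \<Longrightarrow> Img s Z \<in> sets M"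
  unfolding Img_def using measurable_sets[OF funpow_meas[OF Ti_meas]] .

lemma Img_meas: "Z \<in> sets M \<Longrightarrow> measure M (Img s Z) = measure M Z"
  unfolding Img_def by (rule funpow_pres[OF Ti_meas Ti_pres])

lemma Img_mem: "z \<in> Z \<Longrightarrow> z \<in> space M \<Longrightarrow> (T ^^ s) z \<in> Img s Z"
  unfolding Img_def using Tn_Tin funpow_space[OF T_meas] by auto

lemma Tn_pres: "A \<in> sets M \<Longrightarrow> measure M ((T ^^ n) -` A \<inter> space M) = measure M A"
  by (rule funpow_pres[OF T_meas T_pres])

lemma Tn_sets: "A \<in> sets M \<Longrightarrow> (T ^^ n) -` A \<inter> space M \<in> sets M"
  using measurable_sets[OF funpow_meas[OF T_meas]] .

end


context ES begin

lemma recur: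
  assumes A: "A \<in> sets M" "measure M A > 0"
  shows "AE x in M. \<forall>N. \<exists>n\<ge>N. (T ^^ n) x \<in> A"
proof -
  define U where "U N = {x \<in> space M. \<exists>n\<ge>N. (T ^^ n) x \<in> A}" for N
  have Us: "U N \<in> sets M" for N
  proof -
    have "U N = (\<Union>n\<in>{N..}. (T ^^ n) -` A \<inter> space M)" unfolding U_def by auto
    also have "\<dots> \<in> sets M" by (intro sets.countable_UN'') (auto intro: Tn_sets[OF A(1)])
    finally show ?thesis .
  qed
  have UN: "U N = (T ^^ N) -` (U 0) \<inter> space M" for N
  proof (intro set_eqI iffI)
    fix x assume "x \<in> U N"
    then obtain n where n: "x \<in> space M" "n \<ge> N" "(T ^^ n) x \<in> A" unfolding U_def by auto
    have "(T ^^ (n - N)) ((T ^^ N) x) = (T ^^ (n - N + N)) x"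
      by (simp add: funpow_add)
    then have "(T ^^ (n - N)) ((T ^^ N) x) = (T ^^ n) x" using n(2) by simp
    then show "x \<in> (T ^^ N) -` (U 0) \<inter> space M"
      using n funpow_space[OF T_meas n(1)] unfolding U_def by (auto intro!: exI[of _ "n - N"])
  next
    fix x assume "x \<in> (T ^^ N) -` (U 0) \<inter> space M"
    then obtain m where m: "x \<in> space M" "(T ^^ m) ((T ^^ N) x) \<in> A" unfolding U_def by auto
    have "(T ^^ m) ((T ^^ N) x) = (T ^^ (m + N)) x" by (simp add: funpow_add)
    then show "x \<in> U N" using m unfolding U_def by (auto intro!: exI[of _ "m + N"])
  qed
  have mU: "measure M (U N) = measure M (U 0)" for N
    using Tn_pres[OF Us[of 0], of N] UN[of N] by simp
  define R where "R = {x \<in> space M. \<forall>N. \<exists>n\<ge>N. (T ^^ n) x \<in> A}"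
  have R_eq: "R = (\<Inter>N. U N)" unfolding R_def U_def by auto
  have Rs: "R \<in> sets M" unfolding R_eq using Us by auto
  have dec: "decseq U"
    unfolding decseq_Suc_iff
  proof (intro allI subsetI)
    fix N x assume "x \<in> U (Suc N)"
    then obtain n where "x \<in> space M" "n \<ge> Suc N" "(T ^^ n) x \<in> A" unfolding U_def by blast
    then show "x \<in> U N" unfolding U_def by (intro CollectI conjI exI[of _ n]) auto
  qed
  have "(\<lambda>N. measure M (U N)) \<longlonglongrightarrow> measure M R"
    unfolding R_eq by (rule finite_Lim_measure_decseq) (use Us dec in auto)
  moreover have "(\<lambda>N. measure M (U N)) = (\<lambda>N. measure M (U 0))"
    by (rule ext, rule mU)
  ultimately have mR: "measure M R = measure M (U 0)"
    by (simp add: LIMSEQ_const_iff)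
  have "A \<subseteq> U 0" unfolding U_def using sets.sets_into_space[OF A(1)]
    by (auto intro!: exI[of _ 0])
  then have "measure M A \<le> measure M R" unfolding mR by (rule finite_measure_mono) (rule Us)
  then have Rpos: "measure M R > 0" using A(2) by simp
  have inv_R: "T -` R \<inter> space M = R"
  proof (intro set_eqI iffI)
    fix x assume x: "x \<in> T -` R \<inter> space M"
    show "x \<in> R" unfolding R_def
    proof (intro CollectI conjI allI)
      show "x \<in> space M" using x by auto
      fix N
      from x obtain n where "n \<ge> N" "(T ^^ n) (T x) \<in> A" unfolding R_def by blast
      moreover have "(T ^^ n) (T x) = (T ^^ Suc n) x" by (simp add: funpow_swap1)
      ultimately show "\<exists>n\<ge>N. (T ^^ n) x \<in> A" by (intro exI[of _ "Suc n"]) auto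
    qed
  next
    fix x assume x: "x \<in> R"
    have "T x \<in> R" unfolding R_def
    proof (intro CollectI conjI allI)
      show "T x \<in> space M" using x T_space unfolding R_def by auto
      fix N
      from x obtain n where "n \<ge> Suc N" "(T ^^ n) x \<in> A" unfolding R_def by blast
      moreover have "(T ^^ n) x = (T ^^ (n - 1)) (T x)"
        using \<open>n \<ge> Suc N\<close> by (cases n) (auto simp: funpow_swap1)
      ultimately show "\<exists>n\<ge>N. (T ^^ n) (T x) \<in> A" by (intro exI[of _ "n - 1"]) auto
    qed
    then show "x \<in> T -` R \<inter> space M" using x unfolding R_def by auto
  qed
  have "measure M R = 0 \<or> measure M R = 1"
    using erg Rs inv_R unfolding ergodic_map_def by blast
  then have "measure M R = 1" using Rpos by auto
  then have "AE x in M. x \<in> R" by (rule AE_prob_1)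
  then show ?thesis by eventually_elim (auto simp: R_def)
qed

lemma halve:
  assumes A: "A \<in> sets M" "measure M A > 0"
  shows "\<exists>B\<in>sets M. B \<subseteq> A \<and> 0 < measure M B \<and> measure M B \<le> measure M A / 2"
proof -
  have "\<not> atom M A" using nonat unfolding non_atomic_def by blast
  then obtain B where B: "B \<in> sets M" "B \<subseteq> A" "measure M B \<noteq> 0" "measure M B \<noteq> measure M A"
    using A unfolding atom_def by blast
  have le: "measure M B \<le> measure M A" by (rule finite_measure_mono[OF B(2) A(1)])
  have pos: "measure M B > 0" using B(3) measure_nonneg[of M B] by linarith
  have D: "measure M (A - B) = measure M A - measure M B" by (rule finite_measure_Diff[OF A(1) B(1,2)])
  show ?thesis
  proof (cases "measure M B \<le> measure M A / 2")
    case True then show ?thesis using B pos by blast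
  next
    case False
    then show ?thesis using D le B(4) A(1) B(1)
      by (intro bexI[of _ "A - B"]) auto
  qed
qed

lemma small_pow: "\<exists>A\<in>sets M. 0 < measure M A \<and> measure M A \<le> (1/2)^n"
proof (induction n)
  case 0
  show ?case using prob_space by (intro bexI[of _ "space M"]) auto
next
  case (Suc n)
  then obtain A where A: "A \<in> sets M" "0 < measure M A" "measure M A \<le> (1/2)^n" by blast
  from halve[OF A(1,2)] obtain B where "B \<in> sets M" "0 < measure M B" "measure M B \<le> measure M A / 2"
    by blast
  then show ?case using A(3) by (intro bexI[of _ B]) auto
qed

lemma small:
  assumes "\<delta> > 0"
  shows "\<exists>A\<in>sets M. 0 < measure M A \<and> measure M A \<le> \<delta>"
proof -
  have "(\<lambda>n. (1/2::real)^n) \<longlonglongrightarrow> 0" by (rule LIMSEQ_realpow_zero) auto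
  from order_tendstoD(2)[OF this assms] obtain n where "(1/2::real)^n < \<delta>"
    by (auto simp: eventually_sequentially)
  with small_pow[of n] show ?thesis by force
qed

end


lemma geo_bound:
  fixes w :: "nat \<Rightarrow> real"
  assumes nn: "\<And>k. w k \<ge> 0" and st: "\<And>k. (real k + 2) * w (Suc k) \<le> w k / 4"
  shows "(real (k + Suc d) + 1) * w (k + Suc d) \<le> w k * (1/4) ^ Suc d"
proof (induction d)
  case 0
  show ?case using st[of k] by (simp add: algebra_simps)
next
  case (Suc d)
  have "(real (k + Suc (Suc d)) + 1) * w (k + Suc (Suc d)) = (real (k + Suc d) + 2) * w (Suc (k + Suc d))"
    by simp
  also have "\<dots> \<le> w (k + Suc d) / 4" by (rule st)
  also have "\<dots> \<le> (real (k + Suc d) + 1) * w (k + Suc d) / 4"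
    using nn[of "k + Suc d"] by (simp add: mult_le_cancel_right1)
  also have "\<dots> \<le> w k * (1/4) ^ Suc d / 4" by (rule divide_right_mono[OF Suc.IH]) simp
  finally show ?case by simp
qed

context ES begin

lemma union_bound:
  assumes R: "\<And>n. R n \<in> sets M" and b: "\<And>n. measure M (R n) \<le> c * (1/4) ^ n"
  shows "measure M (\<Union>n. R n) \<le> c * (4/3)"
proof -
  have sg: "summable (\<lambda>n. c * (1/4::real) ^ n)"
    by (intro summable_mult summable_geometric) simp
  have sm: "summable (\<lambda>n. measure M (R n))"
    by (rule summable_comparison_test[OF _ sg]) (use b in auto)
  have "measure M (\<Union>n. R n) \<le> (\<Sum>n. measure M (R n))"
    by (rule finite_measure_subadditive_countably) (use R sm in auto)
  also have "\<dots> \<le> (\<Sum>n. c * (1/4::real) ^ n)"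
    by (rule suminf_le) (use b sm sg in auto)
  also have "(\<Sum>n. c * (1/4::real) ^ n) = c * (4/3)"
    by (subst suminf_mult) (simp_all add: suminf_geometric)
  finally show ?thesis .
qed

lemma fin_union_bound:
  assumes "\<And>s. X s \<in> sets M" "\<And>s. measure M (X s) = m"
  shows "measure M (\<Union>s\<in>{..L::nat}. X s) \<le> (real L + 1) * m"
proof -
  have "measure M (\<Union>s\<in>{..L}. X s) \<le> (\<Sum>s\<in>{..L}. measure M (X s))"
    by (rule measure_UNION_le) (use assms in auto)
  also have "\<dots> = (real L + 1) * m" using assms(2) by simp
  finally show ?thesis .
qed

lemma construct:
  assumes e: "e > 0"
  shows "\<exists>B\<in>sets M. measure M B < e \<and>
     (\<exists>C. (\<forall>a. C a \<in> sets M \<and> measure M (C a) > 0) \<and>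
          (\<forall>a x i. x \<in> space M \<longrightarrow> i \<le> a \<longrightarrow> (T ^^ i) x \<in> C a \<longrightarrow> x \<in> B)) \<and>
     (\<exists>Z. (\<forall>b. Z b \<in> sets M \<and> measure M (Z b) > 0) \<and>
          (\<forall>b z t. z \<in> Z b \<longrightarrow> t \<le> b \<longrightarrow> (T ^^ t) z \<notin> B))"
proof -
  define P where "P n A \<longleftrightarrow> A \<in> sets M \<and> 0 < measure M A \<and> (n = 0 \<longrightarrow> measure M A \<le> e / 2)" for n :: nat and A
  define Q where "Q n A A' \<longleftrightarrow> (real n + 2) * measure M A' \<le> measure M A / 4" for n :: nat and A A'
  have "\<exists>W. \<forall>n::nat. P n (W n) \<and> Q n (W n) (W (Suc n))"
  proof (rule dependent_nat_choice)
    show "\<exists>x. P 0 x" using small[of "e/2"] e unfolding P_def by auto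
  next
    fix x n assume "P n x"
    then have x: "x \<in> sets M" "0 < measure M x" unfolding P_def by auto
    have "measure M x / (4 * (real n + 2)) > 0" using x by simp
    from small[OF this] obtain y where y: "y \<in> sets M" "0 < measure M y"
      "measure M y \<le> measure M x / (4 * (real n + 2))" by blast
    have "(real n + 2) * measure M y \<le> measure M x / 4"
      using y(3) by (simp add: field_simps)
    then show "\<exists>y. P (Suc n) y \<and> Q n x y" using y unfolding P_def Q_def by auto
  qed
  then obtain W where W: "\<And>n. W n \<in> sets M" "\<And>n. 0 < measure M (W n)" "measure M (W 0) \<le> e / 2"
    "\<And>n. (real n + 2) * measure M (W (Suc n)) \<le> measure M (W n) / 4"
    unfolding P_def Q_def by metis
  have geo: "(real (k + Suc d) + 1) * measure M (W (k + Suc d)) \<le> measure M (W k) * (1/4) ^ Suc d" for k d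
    by (rule geo_bound) (use W(4) in auto)
  have Wsp: "W n \<subseteq> space M" for n using sets.sets_into_space[OF W(1)] .

  define RC where "RC a n = (\<Union>s\<in>{..a + (a+n)}. Img s (W (2*(a+n)+1)))" for a n
  define C where "C a = W (2*a) - (\<Union>n. RC a n)" for a
  define RZ where "RZ b n = (\<Union>s\<in>{..b + (b+1+n)}. (T^^s) -` W (2*(b+1+n)) \<inter> space M)" for b n
  define Z where "Z b = W (2*b+1) - (\<Union>n. RZ b n)" for b
  define B where "B = (\<Union>a. \<Union>i\<in>{..a}. (T^^i) -` C a \<inter> space M)"

  have RCs: "RC a n \<in> sets M" for a n
    unfolding RC_def by (intro sets.finite_UN) (auto intro: Img_sets W(1))
  have RZs: "RZ b n \<in> sets M" for b n
    unfolding RZ_def by (intro sets.finite_UN) (auto intro: Tn_sets W(1))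
  have Cs: "C a \<in> sets M" for a unfolding C_def using RCs W(1) by auto
  have Zs: "Z b \<in> sets M" for b unfolding Z_def using RZs W(1) by auto
  have Bs: "B \<in> sets M" unfolding B_def
    by (intro sets.countable_UN'' sets.finite_UN Tn_sets Cs) auto

  have RCm: "measure M (RC a n) \<le> (measure M (W (2*a)) / 4) * (1/4)^n" for a n
  proof -
    have "measure M (RC a n) \<le> (real (a + (a+n)) + 1) * measure M (W (2*(a+n)+1))"
      unfolding RC_def by (rule fin_union_bound) (auto intro: Img_sets Img_meas W(1))
    also have "\<dots> \<le> (real (2*a + Suc (2*n)) + 1) * measure M (W (2*a + Suc (2*n)))"
    proof -
      have idx: "2*(a+n)+1 = 2*a + Suc (2*n)" by simp
      show ?thesis unfolding idx by (intro mult_right_mono) auto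
    qed
    also have "\<dots> \<le> measure M (W (2*a)) * (1/4) ^ Suc (2*n)" by (rule geo)
    also have "\<dots> \<le> measure M (W (2*a)) * (1/4) ^ Suc n"
      using W(2)[of "2*a"] by (intro mult_left_mono power_decreasing) auto
    finally show ?thesis by simp
  qed
  have RZm: "measure M (RZ b n) \<le> (measure M (W (2*b+1)) / 4) * (1/4)^n" for b n
  proof -
    have "measure M (RZ b n) \<le> (real (b + (b+1+n)) + 1) * measure M (W (2*(b+1+n)))"
      unfolding RZ_def by (rule fin_union_bound) (auto intro: Tn_sets Tn_pres W(1))
    also have "\<dots> \<le> (real ((2*b+1) + Suc (2*n)) + 1) * measure M (W ((2*b+1) + Suc (2*n)))"
    proof -
      have idx: "2*(b+1+n) = (2*b+1) + Suc (2*n)" by simp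
      show ?thesis unfolding idx by (intro mult_right_mono) auto
    qed
    also have "\<dots> \<le> measure M (W (2*b+1)) * (1/4) ^ Suc (2*n)" by (rule geo)
    also have "\<dots> \<le> measure M (W (2*b+1)) * (1/4) ^ Suc n"
      using W(2)[of "2*b+1"] by (intro mult_left_mono power_decreasing) auto
    finally show ?thesis by simp
  qed
  have Cpos: "measure M (C a) > 0" for a
  proof -
    have u: "measure M (\<Union>n. RC a n) \<le> (measure M (W (2*a)) / 4) * (4/3)"
      by (rule union_bound[OF RCs RCm])
    have "measure M (C a) = measure M (W (2*a)) - measure M (W (2*a) \<inter> (\<Union>n. RC a n))"
      unfolding C_def by (rule finite_measure_Diff') (use W(1) RCs in auto)
    moreover have "measure M (W (2*a) \<inter> (\<Union>n. RC a n)) \<le> measure M (\<Union>n. RC a n)"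
      by (rule finite_measure_mono) (use RCs in auto)
    ultimately show ?thesis using u W(2)[of "2*a"] by simp
  qed
  have Zpos: "measure M (Z b) > 0" for b
  proof -
    have u: "measure M (\<Union>n. RZ b n) \<le> (measure M (W (2*b+1)) / 4) * (4/3)"
      by (rule union_bound[OF RZs RZm])
    have "measure M (Z b) = measure M (W (2*b+1)) - measure M (W (2*b+1) \<inter> (\<Union>n. RZ b n))"
      unfolding Z_def by (rule finite_measure_Diff') (use W(1) RZs in auto)
    moreover have "measure M (W (2*b+1) \<inter> (\<Union>n. RZ b n)) \<le> measure M (\<Union>n. RZ b n)"
      by (rule finite_measure_mono) (use RZs in auto)
    ultimately show ?thesis using u W(2)[of "2*b+1"] by simp
  qed
  have Bm: "measure M B < e"
  proof -
    have "measure M (\<Union>i\<in>{..a}. (T^^i) -` C a \<inter> space M) \<le> measure M (W 0) * (1/4)^a" for a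
    proof -
      have "measure M (\<Union>i\<in>{..a}. (T^^i) -` C a \<inter> space M) \<le> (real a + 1) * measure M (C a)"
        by (rule fin_union_bound) (auto intro: Tn_sets Tn_pres Cs)
      also have "\<dots> \<le> (real a + 1) * measure M (W (2*a))"
        unfolding C_def by (intro mult_left_mono finite_measure_mono) (auto intro: W(1))
      also have "\<dots> \<le> measure M (W 0) * (1/4)^a"
      proof (cases a)
        case 0 then show ?thesis by simp
      next
        case (Suc a')
        have "(real a + 1) * measure M (W (2*a)) \<le> (real (0 + Suc (2*a' + 1)) + 1) * measure M (W (0 + Suc (2*a'+1)))"
        proof -
          have idx: "2*a = 0 + Suc (2*a'+1)" using Suc by simp
          show ?thesis unfolding idx using Suc by (intro mult_right_mono) auto
        qed
        also have "\<dots> \<le> measure M (W 0) * (1/4) ^ Suc (2*a'+1)" by (rule geo)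
        also have "\<dots> \<le> measure M (W 0) * (1/4)^a"
          using Suc W(2)[of 0] by (intro mult_left_mono power_decreasing) auto
        finally show ?thesis .
      qed
      finally show ?thesis .
    qed
    then have "measure M B \<le> measure M (W 0) * (4/3)"
      unfolding B_def by (intro union_bound sets.finite_UN Tn_sets Cs) auto
    then show ?thesis using W(3) e by simp
  qed
  show ?thesis
  proof (intro bexI conjI exI)
    show "B \<in> sets M" by (rule Bs)
    show "measure M B < e" by (rule Bm)
    show "\<forall>a. C a \<in> sets M \<and> measure M (C a) > 0" using Cs Cpos by auto
    show "\<forall>b. Z b \<in> sets M \<and> measure M (Z b) > 0" using Zs Zpos by auto
    show "\<forall>a x i. x \<in> space M \<longrightarrow> i \<le> a \<longrightarrow> (T ^^ i) x \<in> C a \<longrightarrow> x \<in> B"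
      unfolding B_def by blast
    show "\<forall>b z t. z \<in> Z b \<longrightarrow> t \<le> b \<longrightarrow> (T ^^ t) z \<notin> B"
    proof (intro allI impI notI)
      fix b z t assume z: "z \<in> Z b" and t: "t \<le> b" and zB: "(T ^^ t) z \<in> B"
      from zB obtain a i where i: "i \<le> a" "(T ^^ i) ((T ^^ t) z) \<in> C a" unfolding B_def by auto
      have zW: "z \<in> W (2*b+1)" "z \<in> space M" using z Wsp unfolding Z_def by auto
      define s where "s = i + t"
      have Ts: "(T ^^ s) z \<in> C a" using i(2) unfolding s_def by (simp add: funpow_add)
      show False
      proof (cases "a \<le> b")
        case True
        have "(T ^^ s) z \<in> Img s (W (2*b+1))" by (rule Img_mem[OF zW])
        moreover have "s \<le> a + (a + (b - a))" "2*(a + (b-a)) + 1 = 2*b+1"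
          using True t i unfolding s_def by auto
        ultimately have "(T ^^ s) z \<in> RC a (b - a)" unfolding RC_def by auto
        then show False using Ts unfolding C_def by auto
      next
        case False
        have "(T ^^ s) z \<in> W (2*a)" using Ts unfolding C_def by auto
        moreover have "s \<le> b + (b + 1 + (a - b - 1))" "2*(b+1+(a-b-1)) = 2*a"
          using False t i unfolding s_def by auto
        ultimately have "z \<in> RZ b (a - b - 1)" unfolding RZ_def using zW by auto
        then show False using z unfolding Z_def by auto
      qed
    qed
  qed
qed

end


lemma qb_bound:
  assumes "0 < x" "x < (1::real)"
  shows "\<lfloor>1 / (1 - x)\<rfloor> \<ge> 1" "qb \<lfloor>1 / (1 - x)\<rfloor> \<le> 1 - x" "qb \<lfloor>1 / (1 - x)\<rfloor> \<ge> 0"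
proof -
  define t where "t = 1 / (1 - x)"
  have p: "1 - x > 0" using assms by simp
  have t1: "t \<ge> 1" unfolding t_def using assms p by (simp add: field_simps)
  show b1: "\<lfloor>1 / (1 - x)\<rfloor> \<ge> 1" using t1 unfolding t_def by linarith
  define b where "b = real_of_int \<lfloor>t\<rfloor>"
  have bt: "b > t - 1" unfolding b_def by linarith
  have bp: "b \<ge> 1" using b1 unfolding b_def t_def by simp
  have "(1 - x) * t = 1" unfolding t_def using p by simp
  have h1: "(1-x)*b \<ge> (1-x)*(t-1)" using bt p by (intro mult_left_mono) auto
  have "(1-x)*(3+2*b) = 3*(1-x) + 2*((1-x)*b)" by (simp add: algebra_simps)
  also have "\<dots> \<ge> 3*(1-x) + 2*((1-x)*(t-1))" using h1 by simp
  also have "(1-x)*(t-1) = (1-x)*t - (1-x)" by (simp add: algebra_simps)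
  also have "(1-x)*t = 1" by fact
  finally have f: "(1 - x) * (3 + 2 * b) \<ge> 3*(1-x) + 2*(1-(1-x))" .
  have "3*(1-x) + 2*(1-(1-x)) \<ge> (2::real)" using assms by simp
  with f have "(1 - x) * (3 + 2 * b) \<ge> 2" by (rule order_trans[rotated])
  then show "qb \<lfloor>1 / (1 - x)\<rfloor> \<le> 1 - x"
    unfolding qb_def t_def[symmetric] b_def[symmetric] using bp
    by (simp add: divide_le_eq mult.commute)
  have "real_of_int \<lfloor>1 / (1 - x)\<rfloor> \<ge> 1" using b1 by linarith
  then have "3 + 2 * real_of_int \<lfloor>1 / (1 - x)\<rfloor> > 0" by linarith
  then show "qb \<lfloor>1 / (1 - x)\<rfloor> \<ge> 0" unfolding qb_def by (intro divide_nonneg_pos) auto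
qed

lemma conc:
  assumes hb: "\<forall>n\<ge>1. bs n \<ge> (1::int)" and sq: "summable (\<lambda>i. qb (bs (Suc i)))"
    and ep: "\<epsilon> > 0"
  shows "\<exists>K\<ge>0. \<forall>n. sum (mu_seq (\<lambda>n. nu_b (bs n)) n) {int n - K..int n} \<ge> 1 - \<epsilon>"
proof -
  define g where "g i = qb (bs (Suc i))" for i
  have gnn: "g i \<ge> 0" for i
  proof -
    have "bs (Suc i) \<ge> 1" using hb by simp
    then show ?thesis unfolding g_def qb_def by simp
  qed
  from suminf_exist_split[OF ep sq] obtain N0 where N0: "\<And>n. n \<ge> N0 \<Longrightarrow> norm (\<Sum>i. g (i + n)) < \<epsilon>"
    unfolding g_def by blast
  define K where "K = (\<Sum>i\<in>{1..N0}. bs i + 2)"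
  have Knn: "K \<ge> 0" unfolding K_def using hb by (intro sum_nonneg) auto
  show ?thesis
  proof (intro exI[of _ K] conjI allI)
    show "K \<ge> 0" by (rule Knn)
    fix n
    let ?mu = "mu_seq (\<lambda>n. nu_b (bs n)) n"
    from mu_basic[OF hb, of n] have nn: "\<And>k. ?mu k \<ge> 0" by blast
    from mu_conc[OF hb, of n N0] obtain c where c: "c \<ge> 0" "c \<le> (\<Sum>i\<in>{1..min n N0}. bs i + 2)"
      "sum ?mu {int n - c..int n} \<ge> 1 - (\<Sum>i\<in>{N0<..n}. qb (bs i))" by blast
    have "(\<Sum>i\<in>{1..min n N0}. bs i + 2) \<le> K" unfolding K_def
      by (rule sum_mono2) (use hb in auto)
    then have cK: "c \<le> K" using c by simp
    have "(\<Sum>i\<in>{N0<..n}. qb (bs i)) = (\<Sum>j\<in>{..<n-N0}. g (j + N0))"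
      unfolding g_def
      by (rule sum.reindex_bij_witness[of _ "\<lambda>j. Suc (j + N0)" "\<lambda>i. i - Suc N0"]) auto
    also have "\<dots> \<le> (\<Sum>j. g (j + N0))"
      by (rule sum_le_suminf) (use summable_ignore_initial_segment[OF sq[folded g_def]] gnn in auto)
    also have "\<dots> < \<epsilon>" using N0[of N0] by simp
    finally have tail: "(\<Sum>i\<in>{N0<..n}. qb (bs i)) < \<epsilon>" .
    have "sum ?mu {int n - c..int n} \<le> sum ?mu {int n - K..int n}"
      by (rule sum_mono2) (use nn cK in auto)
    then show "1 - \<epsilon> \<le> sum ?mu {int n - K..int n}" using c(3) tail by simp
  qed
qed

lemma apply_window:
  fixes \<mu> :: "int \<Rightarrow> real" and g :: "int \<Rightarrow> real"
  assumes nn: "\<And>k. \<mu> k \<ge> 0" and S: "finite S" "\<And>k. k \<notin> S \<Longrightarrow> \<mu> k = 0" "sum \<mu> S = 1"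
    and g: "\<And>k. 0 \<le> g k" "\<And>k. g k \<le> 1" and W: "finite W"
  shows "(\<Sum>\<^sub>\<infinity>k\<in>UNIV. \<mu> k * g k) = sum (\<lambda>k. \<mu> k * g k) S"
    and "(\<forall>k\<in>W. g k = 1) \<Longrightarrow> (\<Sum>\<^sub>\<infinity>k\<in>UNIV. \<mu> k * g k) \<ge> sum \<mu> W"
    and "(\<forall>k\<in>W. g k = 0) \<Longrightarrow> (\<Sum>\<^sub>\<infinity>k\<in>UNIV. \<mu> k * g k) \<le> 1 - sum \<mu> W"
    and "(\<Sum>\<^sub>\<infinity>k\<in>UNIV. \<mu> k * g k) \<ge> 0" "(\<Sum>\<^sub>\<infinity>k\<in>UNIV. \<mu> k * g k) \<le> 1"
proof -
  show eq: "(\<Sum>\<^sub>\<infinity>k\<in>UNIV. \<mu> k * g k) = sum (\<lambda>k. \<mu> k * g k) S"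
    by (rule infsum_fin) (use S in auto)
  have WS: "sum \<mu> W = sum \<mu> (S \<inter> W)"
    by (rule sum.mono_neutral_right) (use S W in auto)
  have split: "sum (\<lambda>k. \<mu> k * g k) S = sum (\<lambda>k. \<mu> k * g k) (S \<inter> W) + sum (\<lambda>k. \<mu> k * g k) (S - W)"
    using S(1) by (rule sum.Int_Diff)
  have splitmu: "sum \<mu> S = sum \<mu> (S \<inter> W) + sum \<mu> (S - W)"
    using S(1) by (rule sum.Int_Diff)
  have le1: "sum (\<lambda>k. \<mu> k * g k) A \<le> sum \<mu> A" for A
    by (rule sum_mono, rule mult_left_le) (use nn g in auto)
  have ge0: "sum (\<lambda>k. \<mu> k * g k) A \<ge> 0" for A
    by (rule sum_nonneg) (use nn g in auto)
  show "(\<forall>k\<in>W. g k = 1) \<Longrightarrow> (\<Sum>\<^sub>\<infinity>k\<in>UNIV. \<mu> k * g k) \<ge> sum \<mu> W"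
  proof -
    assume "\<forall>k\<in>W. g k = 1"
    then have "sum (\<lambda>k. \<mu> k * g k) (S \<inter> W) = sum \<mu> (S \<inter> W)" by simp
    then show ?thesis unfolding eq split WS using ge0[of "S - W"] by simp
  qed
  show "(\<forall>k\<in>W. g k = 0) \<Longrightarrow> (\<Sum>\<^sub>\<infinity>k\<in>UNIV. \<mu> k * g k) \<le> 1 - sum \<mu> W"
  proof -
    assume "\<forall>k\<in>W. g k = 0"
    then have "sum (\<lambda>k. \<mu> k * g k) (S \<inter> W) = 0" by simp
    then show ?thesis unfolding eq split WS using le1[of "S - W"] splitmu S(3) by simp
  qed
  show "(\<Sum>\<^sub>\<infinity>k\<in>UNIV. \<mu> k * g k) \<ge> 0" unfolding eq by (rule ge0)
  show "(\<Sum>\<^sub>\<infinity>k\<in>UNIV. \<mu> k * g k) \<le> 1" unfolding eq using le1[of S] S(3) by simp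
qed



context ES begin

lemma sweep:
  assumes hb: "\<forall>n\<ge>1. bs n \<ge> (1::int)"
    and conc: "\<And>\<epsilon>. \<epsilon> > 0 \<Longrightarrow> \<exists>K\<ge>0. \<forall>n. sum (mu_seq (\<lambda>n. nu_b (bs n)) n) {int n - K..int n} \<ge> 1 - \<epsilon>"
  shows "strong_sweeping_out M T (mu_seq (\<lambda>n. nu_b (bs n)))"
  unfolding strong_sweeping_out_def
proof (intro allI impI)
  fix e :: real assume e: "e > 0"
  let ?mu = "mu_seq (\<lambda>n. nu_b (bs n))"
  from construct[OF e] obtain B C Z where B: "B \<in> sets M" "measure M B < e"
    and C: "\<And>a. C a \<in> sets M" "\<And>a. measure M (C a) > 0"
    "\<And>a x i. x \<in> space M \<Longrightarrow> i \<le> a \<Longrightarrow> (T ^^ i) x \<in> C a \<Longrightarrow> x \<in> B"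
    and Z: "\<And>b. Z b \<in> sets M" "\<And>b. measure M (Z b) > 0"
    "\<And>b z t. z \<in> Z b \<Longrightarrow> t \<le> b \<Longrightarrow> (T ^^ t) z \<notin> B"
    by metis
  have AC: "AE x in M. \<forall>a N. \<exists>n\<ge>N. (T ^^ n) x \<in> C a"
    by (subst AE_all_countable) (auto intro: recur C)
  have AZ: "AE x in M. \<forall>b N. \<exists>n\<ge>N. (T ^^ n) x \<in> Z b"
    by (subst AE_all_countable) (auto intro: recur Z)
  define F where "F x n = apply_meas M T (?mu n) (indicator B) x" for x n
  have props: "0 \<le> F x n \<and> F x n \<le> 1 \<and>
      (\<forall>W. finite W \<longrightarrow> (\<forall>k\<in>W. indicator B (tpow M T k x) = (1::real)) \<longrightarrow> F x n \<ge> sum (?mu n) W) \<and>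
      (\<forall>W. finite W \<longrightarrow> (\<forall>k\<in>W. indicator B (tpow M T k x) = (0::real)) \<longrightarrow> F x n \<le> 1 - sum (?mu n) W)"
    for x n
  proof -
    from mu_basic[OF hb, of n] obtain D where nn: "\<And>k. ?mu n k \<ge> 0" and
      D: "\<And>k. k \<notin> {int n - D..int n} \<Longrightarrow> ?mu n k = 0" "sum (?mu n) {int n - D..int n} = 1" by blast
    note aw = apply_window[where \<mu>="?mu n" and g="\<lambda>k. indicator B (tpow M T k x)", OF nn _ D(1) D(2)]
    show ?thesis unfolding F_def apply_meas_def
      using aw[of "{}"] aw by (auto simp: indicator_def)
  qed
  have tp: "tpow M T k x = (T ^^ nat k) x" if "k \<ge> 0" for k x
    using that by (simp add: tpow_def)
  show "\<exists>B\<in>sets M. measure M B < e \<and>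
      (AE x in M. limsup (\<lambda>n. ereal (apply_meas M T (?mu n) (indicator B) x)) = 1) \<and>
      (AE x in M. liminf (\<lambda>n. ereal (apply_meas M T (?mu n) (indicator B) x)) = 0)"
  proof (intro bexI[OF _ B(1)] conjI)
    show "measure M B < e" by (rule B(2))
    show "AE x in M. limsup (\<lambda>n. ereal (apply_meas M T (?mu n) (indicator B) x)) = 1"
      using AC AE_space
    proof eventually_elim
      case (elim x)
      then have x: "x \<in> space M" and Cx: "\<And>a N. \<exists>n\<ge>N. (T ^^ n) x \<in> C a" by auto
      have le: "limsup (\<lambda>n. ereal (F x n)) \<le> 1"
        by (rule Limsup_bounded) (use props in auto)
      have ge: "1 \<le> limsup (\<lambda>n. ereal (F x n))"
      proof (rule ereal_le_epsilon2)
        fix \<epsilon> :: real assume ep: "\<epsilon> > 0"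
        from conc[OF ep] obtain K where K: "K \<ge> 0" "\<And>n. sum (?mu n) {int n - K..int n} \<ge> 1 - \<epsilon>" by blast
        define a where "a = nat K"
        have big: "\<exists>m\<ge>N. F x m \<ge> 1 - \<epsilon>" for N
        proof -
          obtain m where m: "m \<ge> max N a" "(T ^^ m) x \<in> C a" using Cx by blast
          have "\<forall>k\<in>{int m - K..int m}. indicator B (tpow M T k x) = (1::real)"
          proof
            fix k assume k: "k \<in> {int m - K..int m}"
            have k0: "k \<ge> 0" using k m K unfolding a_def by auto
            define i where "i = m - nat k"
            have "i \<le> a" "i + nat k = m" using k k0 m K unfolding i_def a_def by auto
            then have "(T ^^ i) ((T ^^ nat k) x) = (T ^^ m) x" by (metis comp_apply funpow_add)
            then have "(T ^^ i) ((T ^^ nat k) x) \<in> C a" using m(2) by simp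
            then have "(T ^^ nat k) x \<in> B" using C(3)[OF funpow_space[OF T_meas x] \<open>i \<le> a\<close>] by simp
            then show "indicator B (tpow M T k x) = (1::real)" using tp[OF k0] by simp
          qed
          then have "F x m \<ge> sum (?mu m) {int m - K..int m}" using props[of x m] by auto
          then show ?thesis using K(2)[of m] m by (intro exI[of _ m]) auto
        qed
        have "ereal (1 - \<epsilon>) \<le> limsup (\<lambda>n. ereal (F x n))"
          unfolding limsup_INF_SUP
        proof (rule INF_greatest)
          fix N :: nat
          from big[of N] obtain m where "m \<ge> N" "F x m \<ge> 1 - \<epsilon>" by blast
          then show "ereal (1 - \<epsilon>) \<le> (SUP m\<in>{N..}. ereal (F x m))"
            by (intro SUP_upper2[of m]) auto
        qed
        then have "ereal (1 - \<epsilon>) + ereal \<epsilon> \<le> limsup (\<lambda>n. ereal (F x n)) + ereal \<epsilon>"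
          by (rule add_right_mono)
        then show "1 \<le> limsup (\<lambda>n. ereal (F x n)) + ereal \<epsilon>" by (simp add: one_ereal_def)
      qed
      show ?case using le ge unfolding F_def by simp
    qed
    show "AE x in M. liminf (\<lambda>n. ereal (apply_meas M T (?mu n) (indicator B) x)) = 0"
      using AZ AE_space
    proof eventually_elim
      case (elim x)
      then have x: "x \<in> space M" and Zx: "\<And>b N. \<exists>n\<ge>N. (T ^^ n) x \<in> Z b" by auto
      have ge: "0 \<le> liminf (\<lambda>n. ereal (F x n))"
        by (rule Liminf_bounded) (use props in auto)
      have le: "liminf (\<lambda>n. ereal (F x n)) \<le> 0"
      proof (rule ereal_le_epsilon2)
        fix \<epsilon> :: real assume ep: "\<epsilon> > 0"
        from conc[OF ep] obtain K where K: "K \<ge> 0" "\<And>n. sum (?mu n) {int n - K..int n} \<ge> 1 - \<epsilon>" by blast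
        define b where "b = nat K"
        have small: "\<exists>n\<ge>N. F x n \<le> \<epsilon>" for N
        proof -
          obtain m where m: "m \<ge> N" "(T ^^ m) x \<in> Z b" using Zx by blast
          define n where "n = m + b"
          have "\<forall>k\<in>{int n - K..int n}. indicator B (tpow M T k x) = (0::real)"
          proof
            fix k assume k: "k \<in> {int n - K..int n}"
            have k0: "k \<ge> 0" using k K unfolding n_def b_def by auto
            define t where "t = nat k - m"
            have "t \<le> b" "t + m = nat k" using k k0 K unfolding t_def n_def b_def by auto
            then have "(T ^^ nat k) x = (T ^^ t) ((T ^^ m) x)" by (metis comp_apply funpow_add)
            then have "(T ^^ nat k) x \<notin> B" using Z(3)[OF m(2) \<open>t \<le> b\<close>] by simp
            then show "indicator B (tpow M T k x) = (0::real)" using tp[OF k0] by simp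
          qed
          then have "F x n \<le> 1 - sum (?mu n) {int n - K..int n}" using props[of x n] by auto
          then show ?thesis using K(2)[of n] m unfolding n_def by (intro exI[of _ "m + b"]) auto
        qed
        have "liminf (\<lambda>n. ereal (F x n)) \<le> ereal \<epsilon>"
          unfolding liminf_SUP_INF
        proof (rule SUP_least)
          fix N :: nat
          from small[of N] obtain n where "n \<ge> N" "F x n \<le> \<epsilon>" by blast
          then show "(INF m\<in>{N..}. ereal (F x m)) \<le> ereal \<epsilon>"
            by (intro INF_lower2[of n]) auto
        qed
        then show "liminf (\<lambda>n. ereal (F x n)) \<le> 0 + ereal \<epsilon>" by simp
      qed
      show ?case using le ge unfolding F_def by simp
    qed
  qed
qed

end

theorem mainTheorem14:
  fixes a :: "nat \<Rightarrow> real"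
  assumes "\<forall>n\<ge>1. 0 < a n \<and> a n < 1"
    and "summable (\<lambda>n. 1 - a (Suc n))"
  shows "(\<forall>n\<ge>1. expect_int (nu_b \<lfloor>1 / (1 - a n)\<rfloor>) = 0 \<and>
            moment2_int (nu_b \<lfloor>1 / (1 - a n)\<rfloor>) =
              (2 * (of_int \<lfloor>1 / (1 - a n)\<rfloor>)^2 + 4 * of_int \<lfloor>1 / (1 - a n)\<rfloor> + 2)
                / (3 + 2 * of_int \<lfloor>1 / (1 - a n)\<rfloor>))
       \<and> (\<forall>(M :: 'x measure) T. ergodic_system M T \<longrightarrow>
            strong_sweeping_out M T (mu_seq (\<lambda>n. nu_b \<lfloor>1 / (1 - a n)\<rfloor>)))"
proof -
  have hb: "\<forall>n\<ge>1. \<lfloor>1 / (1 - a n)\<rfloor> \<ge> (1::int)"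
    using assms(1) qb_bound(1) by blast
  have sq: "summable (\<lambda>i. qb \<lfloor>1 / (1 - a (Suc i))\<rfloor>)"
  proof (rule summable_comparison_test'[OF assms(2)])
    fix n :: nat
    have "0 < a (Suc n)" "a (Suc n) < 1" using assms(1) by auto
    then show "norm (qb \<lfloor>1 / (1 - a (Suc n))\<rfloor>) \<le> 1 - a (Suc n)"
      using qb_bound[of "a (Suc n)"] by simp
  qed
  show ?thesis
  proof (intro conjI allI impI)
    fix n :: nat assume "n \<ge> 1"
    then have b: "\<lfloor>1 / (1 - a n)\<rfloor> \<ge> 1" using hb by blast
    show "expect_int (nu_b \<lfloor>1 / (1 - a n)\<rfloor>) = 0" by (rule expect_nu[OF b])
    show "moment2_int (nu_b \<lfloor>1 / (1 - a n)\<rfloor>) =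
              (2 * (of_int \<lfloor>1 / (1 - a n)\<rfloor>)^2 + 4 * of_int \<lfloor>1 / (1 - a n)\<rfloor> + 2)
                / (3 + 2 * of_int \<lfloor>1 / (1 - a n)\<rfloor>)" by (rule m2_nu[OF b])
  next
    fix M :: "'x measure" and T assume es: "ergodic_system M T"
    have "ES M T" using es unfolding ergodic_system_def ES_def ES_axioms_def by auto
    then show "strong_sweeping_out M T (mu_seq (\<lambda>n. nu_b \<lfloor>1 / (1 - a n)\<rfloor>))"
      by (rule ES.sweep[where bs="\<lambda>n. \<lfloor>1 / (1 - a n)\<rfloor>", OF _ hb conc[OF hb sq]])
  qed
qed


end
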